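(* Let $h_N(\rho)=\tfrac12\big[(\mathrm{tr}\,\rho^{1/2})^2-1\big]$ for density matrices $\rho$ on a finite-dimensional Hilbert space; this is the reduced function of the negativity, i.e. $N(|\psi\rangle)=h_N(\mathrm{tr}_B|\psi\rangle\langle\psi|)=\sum_{i<j}\lambda_i\lambda_j$ for a pure state with Schmidt coefficients $\lambda_i$. Then $h_N$ is strictly concave: for all density matrices $\rho_1\neq\rho_2$ and $0<p<1$, $h_N(p\rho_1+(1-p)\rho_2)>p\,h_N(\rho_1)+(1-p)\,h_N(\rho_2)$.
   Context: The negativity of a bipartite state $\rho$ is $N(\rho)=\sum_i\mu_i$, where $\mu_i$ are the absolute values of the negative eigenvalues of the partial transpose $\rho^{T_A}$. *)

theory Defs
  imports "Jordan_Normal_Form.Matrix" "Jordan_Normal_Form.Conjugate"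
begin

definition mtrace :: "complex mat \<Rightarrow> complex" where
  "mtrace A = (\<Sum>i<dim_row A. A $$ (i, i))"

definition hermitian_mat :: "nat \<Rightarrow> complex mat \<Rightarrow> bool" where
  "hermitian_mat n A \<longleftrightarrow> A \<in> carrier_mat n n \<and>
     (\<forall>i<n. \<forall>j<n. A $$ (i, j) = cnj (A $$ (j, i)))"

definition psd_mat :: "nat \<Rightarrow> complex mat \<Rightarrow> bool" where
  "psd_mat n A \<longleftrightarrow> hermitian_mat n A \<and>
     (\<forall>v \<in> carrier_vec n. Im (conjugate v \<bullet> (A *\<^sub>v v)) = 0 \<and> Re (conjugate v \<bullet> (A *\<^sub>v v)) \<ge> 0)"

definition density_mat :: "nat \<Rightarrow> complex mat \<Rightarrow> bool" where
  "density_mat n \<rho> \<longleftrightarrow> psd_mat n \<rho> \<and> mtrace \<rho> = 1"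

definition mat_sqrt :: "nat \<Rightarrow> complex mat \<Rightarrow> complex mat" where
  "mat_sqrt n A = (THE B. psd_mat n B \<and> B * B = A)"

definition hN :: "nat \<Rightarrow> complex mat \<Rightarrow> real" where
  "hN n \<rho> = ((Re (mtrace (mat_sqrt n \<rho>)))\<^sup>2 - 1) / 2"

end

theory Submission
  imports Defs "Jordan_Normal_Form.Schur_Decomposition"
begin


definition adj :: "complex mat \<Rightarrow> complex mat" where
  "adj A = mat (dim_col A) (dim_row A) (\<lambda>(i,j). cnj (A $$ (j,i)))"

definition dmat :: "nat \<Rightarrow> (nat \<Rightarrow> real) \<Rightarrow> complex mat" where
  "dmat n d = mat n n (\<lambda>(i,j). if i = j then complex_of_real (d i) else 0)"

definition unitary :: "nat \<Rightarrow> complex mat \<Rightarrow> bool" where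
  "unitary n U \<longleftrightarrow> U \<in> carrier_mat n n \<and> adj U * U = 1\<^sub>m n \<and> U * adj U = 1\<^sub>m n"

lemma adj_dim[simp]: "dim_row (adj A) = dim_col A" "dim_col (adj A) = dim_row A"
  by (auto simp: adj_def)

lemma adj_index[simp]: "i < dim_col A \<Longrightarrow> j < dim_row A \<Longrightarrow> adj A $$ (i,j) = cnj (A $$ (j,i))"
  by (auto simp: adj_def)

lemma adj_carrier[simp]: "A \<in> carrier_mat nr nc \<Longrightarrow> adj A \<in> carrier_mat nc nr"
  by (intro carrier_matI) (simp_all add: carrier_matD)

lemma adj_adj[simp]: "adj (adj A) = A"
  by (rule eq_matI) auto

lemma adj_mult: assumes "A \<in> carrier_mat nr n" "B \<in> carrier_mat n nc"
  shows "adj (A * B) = adj B * adj A"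
  by (rule eq_matI) (use assms in \<open>auto simp: scalar_prod_def row_def col_def cnj_sum mult.commute intro!: sum.cong\<close>)

lemma adj_one[simp]: "adj (1\<^sub>m n) = 1\<^sub>m n"
  by (rule eq_matI) auto

lemma adj_zero[simp]: "adj (0\<^sub>m n m) = 0\<^sub>m m n"
  by (rule eq_matI) auto

lemma adj_add: assumes "A \<in> carrier_mat nr nc" "B \<in> carrier_mat nr nc"
  shows "adj (A + B) = adj A + adj B"
  by (rule eq_matI) (use assms in auto)

lemma adj_minus: assumes "A \<in> carrier_mat nr nc" "B \<in> carrier_mat nr nc"
  shows "adj (A - B) = adj A - adj B"
  by (rule eq_matI) (use assms in auto)

lemma adj_smult: "adj (c \<cdot>\<^sub>m A) = cnj c \<cdot>\<^sub>m adj A"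
  by (rule eq_matI) auto

lemma hermitian_adj: "hermitian_mat n A \<longleftrightarrow> A \<in> carrier_mat n n \<and> adj A = A"
proof
  assume h: "hermitian_mat n A"
  then have c: "A \<in> carrier_mat n n" by (auto simp: hermitian_mat_def)
  have "adj A = A"
  proof (rule eq_matI)
    fix i j assume "i < dim_row A" "j < dim_col A"
    then have ij: "i < n" "j < n" using c by auto
    have "A $$ (j,i) = cnj (A $$ (i,j))" using h ij unfolding hermitian_mat_def by blast
    then show "adj A $$ (i,j) = A $$ (i,j)" using ij c by simp
  qed (use c in auto)
  with c show "A \<in> carrier_mat n n \<and> adj A = A" by auto
next
  assume h: "A \<in> carrier_mat n n \<and> adj A = A"
  have "\<forall>i<n. \<forall>j<n. A $$ (i,j) = cnj (A $$ (j,i))"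
  proof (intro allI impI)
    fix i j assume ij: "i < n" "j < n"
    have c: "A \<in> carrier_mat n n" using h by simp
    have "A $$ (i,j) = adj A $$ (i,j)" using h by simp
    also have "\<dots> = cnj (A $$ (j,i))" using c ij by simp
    finally show "A $$ (i,j) = cnj (A $$ (j,i))" .
  qed
  with h show "hermitian_mat n A" unfolding hermitian_mat_def by blast
qed

lemma dmat_carrier[simp]: "dmat n d \<in> carrier_mat n n"
  and dmat_dim[simp]: "dim_row (dmat n d) = n" "dim_col (dmat n d) = n"
  by (auto simp: dmat_def)

lemma dmat_index[simp]: "i < n \<Longrightarrow> j < n \<Longrightarrow> dmat n d $$ (i,j) = (if i = j then complex_of_real (d i) else 0)"
  by (auto simp: dmat_def)

lemma adj_dmat[simp]: "adj (dmat n d) = dmat n d"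
  by (rule eq_matI) auto

lemma dmat_mult: "dmat n d * dmat n e = dmat n (\<lambda>i. d i * e i)"
  by (rule eq_matI) (auto simp: scalar_prod_def row_def col_def if_distrib[of "\<lambda>x. x * _"] cong: if_cong)

lemma dmat_mult_vec: "y \<in> carrier_vec n \<Longrightarrow> dmat n d *\<^sub>v y = vec n (\<lambda>i. complex_of_real (d i) * y $ i)"
  by (rule eq_vecI) (auto simp: mult_mat_vec_def scalar_prod_def row_def if_distrib[of "\<lambda>x. x * _"] cong: if_cong)

lemma form_adj: assumes A: "A \<in> carrier_mat n m" and v: "v \<in> carrier_vec n" and w: "w \<in> carrier_vec m"
  shows "conjugate v \<bullet> (A *\<^sub>v w) = conjugate (adj A *\<^sub>v v) \<bullet> w"
proof -
  have "conjugate v \<bullet> (A *\<^sub>v w) = (\<Sum>i<n. cnj (v$i) * (\<Sum>j<m. A $$ (i,j) * w $ j))"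
    using A v w by (auto simp: scalar_prod_def mult_mat_vec_def row_def atLeast0LessThan)
  also have "\<dots> = (\<Sum>i<n. \<Sum>j<m. cnj (v$i) * A $$ (i,j) * w $ j)"
    by (simp add: sum_distrib_left mult.assoc)
  also have "\<dots> = (\<Sum>j<m. \<Sum>i<n. cnj (v$i) * A $$ (i,j) * w $ j)"
    by (rule sum.swap)
  also have "\<dots> = (\<Sum>j<m. cnj (\<Sum>i<n. cnj (A $$ (i,j)) * v $ i) * w $ j)"
    by (simp add: cnj_sum sum_distrib_left sum_distrib_right mult_ac)
  also have "\<dots> = conjugate (adj A *\<^sub>v v) \<bullet> w"
    using A v w by (auto simp: scalar_prod_def mult_mat_vec_def row_def atLeast0LessThan intro!: sum.cong)
  finally show ?thesis .
qed

lemma cmod_sq_c: "(complex_of_real (cmod z))^2 = z * cnj z"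
  by (metis complex_norm_square of_real_power)

lemma form_dmat: assumes y: "y \<in> carrier_vec n"
  shows "conjugate y \<bullet> (dmat n d *\<^sub>v y) = complex_of_real (\<Sum>i<n. d i * (cmod (y $ i))^2)"
proof -
  have "conjugate y \<bullet> (dmat n d *\<^sub>v y) = (\<Sum>i<n. cnj (y $ i) * (complex_of_real (d i) * y $ i))"
    using y by (auto simp: dmat_mult_vec scalar_prod_def atLeast0LessThan)
  also have "\<dots> = (\<Sum>i<n. complex_of_real (d i * (cmod (y $ i))^2))"
    by (rule sum.cong) (auto simp: cmod_sq_c mult_ac)
  finally show ?thesis by simp
qed

lemma mtrace_cyclic: assumes A: "A \<in> carrier_mat n m" and B: "B \<in> carrier_mat m n"
  shows "mtrace (A * B) = mtrace (B * A)"
proof -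
  have "mtrace (A * B) = (\<Sum>i<n. \<Sum>j<m. A $$ (i,j) * B $$ (j,i))"
    using A B by (auto simp: mtrace_def scalar_prod_def row_def col_def atLeast0LessThan)
  also have "\<dots> = (\<Sum>j<m. \<Sum>i<n. B $$ (j,i) * A $$ (i,j))"
    by (subst sum.swap) (simp add: mult.commute)
  also have "\<dots> = mtrace (B * A)"
    using A B by (auto simp: mtrace_def scalar_prod_def row_def col_def atLeast0LessThan)
  finally show ?thesis .
qed

lemma mtrace_dmat: "mtrace (dmat n d) = complex_of_real (\<Sum>i<n. d i)"
  by (simp add: mtrace_def)

lemma mult3_assoc: assumes "A \<in> carrier_mat n n" "B \<in> carrier_mat n n" "C \<in> carrier_mat n n"
  shows "A * B * C = A * (B * C)"
  using assoc_mult_mat[OF assms] .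

lemma mult5_assoc: assumes "W \<in> carrier_mat n n" "B \<in> carrier_mat n n" "D \<in> carrier_mat n n"
   "B' \<in> carrier_mat n n" "W' \<in> carrier_mat n n"
  shows "(W * B) * D * (B' * W') = W * (B * D * B') * W'"
proof -
  have "(W * B) * D = W * (B * D)" by (rule mult3_assoc[of _ n]) (use assms in auto)
  then have "(W * B) * D * (B' * W') = W * (B * D) * (B' * W')" by simp
  also have "\<dots> = W * ((B * D) * (B' * W'))" by (rule mult3_assoc[of _ n]) (use assms in auto)
  also have "(B * D) * (B' * W') = (B * D * B') * W'" by (rule mult3_assoc[of _ n, symmetric]) (use assms in auto)
  also have "W * ((B * D * B') * W') = W * (B * D * B') * W'" by (rule mult3_assoc[of _ n, symmetric]) (use assms in auto)
  finally show ?thesis .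
qed

lemma unitaryD: assumes "unitary n U"
  shows "U \<in> carrier_mat n n" "adj U \<in> carrier_mat n n" "adj U * U = 1\<^sub>m n" "U * adj U = 1\<^sub>m n"
  using assms by (auto simp: unitary_def)

lemma unitary_mult: assumes u: "unitary n U" and v: "unitary n V" shows "unitary n (U * V)"
proof -
  note U = unitaryD[OF u] and V = unitaryD[OF v]
  have a: "adj (U*V) = adj V * adj U" by (rule adj_mult[OF U(1) V(1)])
  have "adj U * (U * V) = adj U * U * V" using mult3_assoc[OF U(2) U(1) V(1)] by simp
  also have "\<dots> = V" using U V by simp
  finally have x: "adj U * (U * V) = V" .
  have "adj V * adj U * (U * V) = adj V * (adj U * (U * V))" by (rule mult3_assoc[of _ n]) (use U V in auto)
  also have "\<dots> = 1\<^sub>m n" using x V by simp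
  finally have 1: "adj (U*V) * (U*V) = 1\<^sub>m n" using a by simp
  have "V * (adj V * adj U) = V * adj V * adj U" using mult3_assoc[OF V(1) V(2) U(2)] by simp
  also have "\<dots> = adj U" using U V by simp
  finally have y: "V * (adj V * adj U) = adj U" .
  have "U * V * (adj V * adj U) = U * (V * (adj V * adj U))" by (rule mult3_assoc[of _ n]) (use U V in auto)
  also have "\<dots> = 1\<^sub>m n" using y U by simp
  finally have 2: "(U*V) * adj (U*V) = 1\<^sub>m n" using a by simp
  show ?thesis using 1 2 U V by (auto simp: unitary_def)
qed

lemma conj_unitary: assumes u: "unitary n U" and X: "X \<in> carrier_mat n n"
  shows "U * (adj U * X * U) * adj U = X"
proof -
  note U = unitaryD[OF u]
  have "adj U * X * U * adj U = adj U * X * (U * adj U)"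
    by (rule mult3_assoc[of _ n]) (use U X in auto)
  also have "\<dots> = adj U * X" using U X by simp
  finally have x: "adj U * X * U * adj U = adj U * X" .
  have "U * (adj U * X * U) * adj U = U * (adj U * X * U * adj U)"
    by (rule mult3_assoc[of _ n]) (use U X in auto)
  also have "\<dots> = U * (adj U * X)" using x by simp
  also have "\<dots> = U * adj U * X" by (rule mult3_assoc[of _ n, symmetric]) (use U X in auto)
  also have "\<dots> = X" using U X by simp
  finally show ?thesis .
qed

definition nrm :: "complex vec \<Rightarrow> complex vec" where
  "nrm w = complex_of_real (1 / sqrt (Re (w \<bullet>c w))) \<cdot>\<^sub>v w"

lemma scprodc_smult: assumes "w \<in> carrier_vec n" "u \<in> carrier_vec n"
  shows "(a \<cdot>\<^sub>v w) \<bullet>c (b \<cdot>\<^sub>v u) = a * cnj b * (w \<bullet>c u)"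
  using assms by (simp add: scalar_prod_def sum_distrib_left mult_ac)

lemma scprodc_self: assumes w: "w \<in> carrier_vec n" and w0: "w \<noteq> 0\<^sub>v n"
  shows "w \<bullet>c w = complex_of_real (Re (w \<bullet>c w))" "Re (w \<bullet>c w) > 0"
proof -
  have "w \<bullet>c w > 0" using w w0 by simp
  then show "w \<bullet>c w = complex_of_real (Re (w \<bullet>c w))" "Re (w \<bullet>c w) > 0"
    by (auto simp: less_complex_def complex_eq_iff)
qed

lemma nrm_carrier[simp]: "w \<in> carrier_vec n \<Longrightarrow> nrm w \<in> carrier_vec n"
  by (simp add: nrm_def)

lemma nrm_unit: assumes w: "w \<in> carrier_vec n" and w0: "w \<noteq> 0\<^sub>v n"
  shows "nrm w \<bullet>c nrm w = 1"
proof -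
  note s = scprodc_self[OF w w0]
  define r where "r = Re (w \<bullet>c w)"
  have r: "r > 0" using s r_def by simp
  define c where "c = complex_of_real (1 / sqrt r)"
  have "nrm w \<bullet>c nrm w = c * cnj c * (w \<bullet>c w)"
    unfolding nrm_def r_def[symmetric] c_def[symmetric] by (rule scprodc_smult[OF w w])
  also have "\<dots> = complex_of_real ((1 / sqrt r) * (1 / sqrt r) * r)"
  proof -
    have wr: "w \<bullet>c w = complex_of_real r" using s(1) r_def by simp
    show ?thesis unfolding c_def wr by (simp only: complex_cnj_complex_of_real of_real_mult)
  qed
  also have "(1 / sqrt r) * (1 / sqrt r) * r = 1"
  proof -
    have "sqrt r * sqrt r = r" using r by simp
    then show ?thesis using r by (simp add: field_simps)
  qed
  finally show ?thesis by simp
qed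

lemma nrm_orth: assumes "w \<in> carrier_vec n" "u \<in> carrier_vec n" "w \<bullet>c u = 0"
  shows "nrm w \<bullet>c nrm u = 0"
  unfolding nrm_def using scprodc_smult[OF assms(1,2)] assms(3) by simp

lemma nrm_id: assumes "w \<bullet>c w = 1" shows "nrm w = w"
  unfolding nrm_def using assms by simp

lemma eig_basis:
  assumes A: "A \<in> carrier_mat n n" and n0: "n \<noteq> 0"
  shows "\<exists>W e. unitary n W \<and> col (adj W * A * W) 0 = vec n (\<lambda>i. if i = 0 then e else 0)"
proof -
  obtain as where cp: "char_poly A = (\<Prod>a\<leftarrow>as. [:-a,1:])" and len: "length as = n"
    using char_poly_factorized[OF A] by blast
  define e where "e = hd as"
  have "e \<in> set as" using len n0 e_def by (cases as) auto
  then have "poly (char_poly A) e = 0" unfolding cp poly_prod_list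
    by (auto simp: prod_list_zero_iff)
  then have "eigenvalue A e" using eigenvalue_root_char_poly[OF A] by simp
  then obtain v where ev: "eigenvector A v e" unfolding eigenvalue_def by blast
  have v: "v \<in> carrier_vec n" and v0: "v \<noteq> 0\<^sub>v n" and Av: "A *\<^sub>v v = e \<cdot>\<^sub>v v"
    using ev A unfolding eigenvector_def by auto
  define v1 where "v1 = nrm v"
  have v1: "v1 \<in> carrier_vec n" using v v1_def by simp
  have v11: "v1 \<bullet>c v1 = 1" using nrm_unit[OF v v0] v1_def by simp
  have v10: "v1 \<noteq> 0\<^sub>v n" using v11 by auto
  have Av1: "A *\<^sub>v v1 = e \<cdot>\<^sub>v v1"
    unfolding v1_def nrm_def using mult_mat_vec[OF A v] Av by (simp add: smult_smult_assoc mult.commute)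
  interpret cof_vec_space n "TYPE(complex)" .
  define b where "b = basis_completion v1"
  from basis_completion[OF v1 v10, folded b_def]
  have dist_b: "distinct b" and indep: "\<not> lin_dep (set b)" and bcar: "set b \<subseteq> carrier_vec n"
    and hdb: "hd b = v1" and len_b: "length b = n" by auto
  from hdb len_b n0 obtain vs where bv: "b = v1 # vs" by (cases b) auto
  define ws where "ws = gram_schmidt n b"
  from gram_schmidt_result[OF bcar dist_b indep ws_def]
  have wso: "corthogonal ws" and wsc: "set ws \<subseteq> carrier_vec n" and wsl: "length ws = n"
    using len_b by auto
  have hdws: "hd ws = v1" using gram_schmidt_hd[OF v1, of vs] bv ws_def by simp
  define ws1 where "ws1 = map nrm ws"
  have ws1c: "set ws1 \<subseteq> carrier_vec n" using wsc ws1_def by auto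
  have ws1l: "length ws1 = n" using wsl ws1_def by simp
  have hdws1: "hd ws1 = v1" using hdws wsl n0 ws1_def nrm_id[OF v11]
    by (cases ws) auto
  have wsi: "\<And>i. i < n \<Longrightarrow> ws ! i \<in> carrier_vec n" using wsc wsl by auto
  have ws0: "\<And>i. i < n \<Longrightarrow> ws ! i \<noteq> 0\<^sub>v n"
  proof
    fix i assume i: "i < n" and z: "ws ! i = 0\<^sub>v n"
    have "ws ! i \<bullet>c ws ! i \<noteq> 0" using corthogonalD[OF wso, of i i] i wsl by auto
    then show False using z by simp
  qed
  have ws1o: "\<And>i j. i < n \<Longrightarrow> j < n \<Longrightarrow> ws1 ! i \<bullet>c ws1 ! j = (if i = j then 1 else 0)"
  proof -
    fix i j assume i: "i < n" and j: "j < n"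
    show "ws1 ! i \<bullet>c ws1 ! j = (if i = j then 1 else 0)"
    proof (cases "i = j")
      case True then show ?thesis using nrm_unit[OF wsi[OF i] ws0[OF i]] i wsl ws1_def by simp
    next
      case False
      then have "ws ! i \<bullet>c ws ! j = 0" using corthogonalD[OF wso, of i j] i j wsl by auto
      then show ?thesis using nrm_orth[OF wsi[OF i] wsi[OF j]] i j wsl ws1_def False by simp
    qed
  qed
  have ws1orth: "corthogonal ws1"
    by (rule corthogonalI) (auto simp: ws1o ws1l)
  define W where "W = mat_of_cols n ws1"
  have Wc: "W \<in> carrier_mat n n" using W_def ws1l by (metis mat_of_cols_carrier(1))
  have WinvW: "corthogonal_inv W = adj W"
  proof (rule eq_matI)
    fix i j assume i: "i < dim_row (adj W)" and j: "j < dim_col (adj W)"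
    then have i': "i < n" and j': "j < n" using Wc by auto
    have "corthogonal_inv W $$ (i,j) = vec_inv (ws1 ! i) $ j"
      unfolding corthogonal_inv_def W_def using i' j' ws1c ws1l
      by (simp add: mat_of_rows_index)
    also have "\<dots> = cnj (ws1 ! i $ j)"
    proof -
      have "ws1 ! i \<in> carrier_vec n" using ws1c ws1l i' by auto
      then show ?thesis unfolding vec_inv_def using ws1o[OF i' i'] j' by auto
    qed
    also have "\<dots> = adj W $$ (i,j)" using i' j' Wc unfolding W_def
      by (simp add: mat_of_cols_index ws1l)
    finally show "corthogonal_inv W $$ (i,j) = adj W $$ (i,j)" .
  qed (use Wc in \<open>auto simp: corthogonal_inv_def\<close>)
  have c1: "adj W * W = 1\<^sub>m n"
    using corthogonal_inv_result[OF orthogonal_mat_of_cols[OF ws1c ws1orth ws1l]]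
    unfolding inverts_mat_def W_def[symmetric] WinvW using Wc by simp
  have c2: "W * adj W = 1\<^sub>m n"
    using mat_mult_left_right_inverse[OF adj_carrier[OF Wc] Wc c1] by simp
  have uW: "unitary n W" using Wc c1 c2 by (simp add: unitary_def)
  define A' where "A' = adj W * A * W"
  have col0: "col A' 0 = vec n (\<lambda>i. if i = 0 then e else 0)"
    using corthogonal_col_ev_0[OF A v1 v10 Av1 _ hdws1 ws1c ws1orth ws1l] n0
    unfolding W_def[symmetric] WinvW A'_def by simp
  have fin: "unitary n W \<and> col (adj W * A * W) 0 = vec n (\<lambda>i. if i = 0 then e else 0)"
    using uW col0 unfolding A'_def by simp
  show ?thesis
    apply (rule exI[where x=W])
    apply (rule exI[where x=e])
    apply (rule fin)
    done
qed

lemma spectral: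
  assumes "A \<in> carrier_mat n n" "adj A = A"
  shows "\<exists>U d. unitary n U \<and> A = U * dmat n d * adj U"
  using assms
proof (induction n arbitrary: A)
  case 0
  then show ?case
    by (intro exI[of _ "1\<^sub>m 0"] exI[of _ "\<lambda>_. 0"]) (auto simp: unitary_def intro!: eq_matI)
next
  case (Suc m A)
  define n where "n = Suc m"
  have A: "A \<in> carrier_mat n n" and hA: "adj A = A" using Suc.prems n_def by auto
  obtain W e where uW: "unitary n W" and col0: "col (adj W * A * W) 0 = vec n (\<lambda>i. if i = 0 then e else 0)"
    using eig_basis[OF A] n_def by blast
  note Wc = unitaryD(1)[OF uW]
  define A' where "A' = adj W * A * W"
  have col0: "col A' 0 = vec n (\<lambda>i. if i = 0 then e else 0)" using col0 A'_def by simp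
  have A'c: "A' \<in> carrier_mat n n" using mult_carrier_mat[OF mult_carrier_mat[OF adj_carrier[OF Wc] A] Wc] A'_def by simp
  have hA': "adj A' = A'"
  proof -
    have "adj A' = adj W * adj (adj W * A)"
      unfolding A'_def by (rule adj_mult[of _ n n _ n]) (use A Wc in auto)
    also have "adj (adj W * A) = adj A * W"
      by (subst adj_mult[of _ n n _ n]) (use A Wc in auto)
    finally show ?thesis unfolding A'_def hA using A Wc by (simp add: mult3_assoc[of _ n])
  qed
  have Ai0: "\<And>i. i < n \<Longrightarrow> A' $$ (i,0) = (if i = 0 then e else 0)"
  proof -
    fix i assume i: "i < n"
    have "A' $$ (i,0) = col A' 0 $ i" using i A'c n_def by simp
    then show "A' $$ (i,0) = (if i = 0 then e else 0)" using col0 i by simp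
  qed
  have A0j: "\<And>j. j < n \<Longrightarrow> A' $$ (0,j) = (if j = 0 then cnj e else 0)"
  proof -
    fix j assume j: "j < n"
    have "A' $$ (0,j) = adj A' $$ (0,j)" using hA' by simp
    also have "\<dots> = cnj (A' $$ (j,0))" using j A'c n_def by simp
    finally show "A' $$ (0,j) = (if j = 0 then cnj e else 0)" using Ai0[OF j] by simp
  qed
  have er: "cnj e = e" using Ai0[of 0] A0j[of 0] n_def by simp
  then have eR: "e = complex_of_real (Re e)" by (simp add: complex_eq_iff)
  define A3 where "A3 = mat m m (\<lambda>(i,j). A' $$ (Suc i, Suc j))"
  have A3c: "A3 \<in> carrier_mat m m" by (simp add: A3_def)
  have hA3: "adj A3 = A3"
  proof (rule eq_matI)
    fix i j assume i: "i < dim_row A3" and j: "j < dim_col A3"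
    then have i': "i < m" and j': "j < m" using A3c by auto
    have "adj A3 $$ (i,j) = cnj (A' $$ (Suc j, Suc i))" using i' j' by (simp add: A3_def)
    also have "\<dots> = adj A' $$ (Suc i, Suc j)" using i' j' A'c n_def by simp
    also have "\<dots> = A3 $$ (i,j)" using i' j' hA' by (simp add: A3_def)
    finally show "adj A3 $$ (i,j) = A3 $$ (i,j)" .
  qed (use A3c in auto)
  from Suc.IH[OF A3c hA3] obtain U3 d3 where u3: "unitary m U3" and A3e: "A3 = U3 * dmat m d3 * adj U3"
    by blast
  note U3 = unitaryD[OF u3]
  define Bl where "Bl = four_block_mat (1\<^sub>m 1) (0\<^sub>m 1 m) (0\<^sub>m m 1) U3"
  have Blc: "Bl \<in> carrier_mat n n" unfolding Bl_def n_def using U3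
    by (metis four_block_carrier_mat one_carrier_mat plus_1_eq_Suc)
  have adjBl: "adj Bl = four_block_mat (1\<^sub>m 1) (0\<^sub>m 1 m) (0\<^sub>m m 1) (adj U3)"
    by (rule eq_matI) (use U3 in \<open>auto simp: Bl_def\<close>)
  have "adj Bl * Bl = four_block_mat (1\<^sub>m 1 * 1\<^sub>m 1 + 0\<^sub>m 1 m * 0\<^sub>m m 1) (1\<^sub>m 1 * 0\<^sub>m 1 m + 0\<^sub>m 1 m * U3)
     (0\<^sub>m m 1 * 1\<^sub>m 1 + adj U3 * 0\<^sub>m m 1) (0\<^sub>m m 1 * 0\<^sub>m 1 m + adj U3 * U3)"
    unfolding adjBl unfolding Bl_def
    by (rule mult_four_block_mat) (use U3 in auto)
  also have "\<dots> = 1\<^sub>m n" using U3 n_def by simp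
  finally have b1: "adj Bl * Bl = 1\<^sub>m n" .
  have b2: "Bl * adj Bl = 1\<^sub>m n"
    using mat_mult_left_right_inverse[OF adj_carrier[OF Blc] Blc b1] by simp
  have uBl: "unitary n Bl" using Blc b1 b2 by (simp add: unitary_def)
  define d where "d = (\<lambda>i. if i = 0 then Re e else d3 (i - 1))"
  have Dblk: "dmat n d = four_block_mat (dmat 1 (\<lambda>_. Re e)) (0\<^sub>m 1 m) (0\<^sub>m m 1) (dmat m d3)"
    by (rule eq_matI) (auto simp: n_def d_def)
  have "Bl * dmat n d = four_block_mat (1\<^sub>m 1 * dmat 1 (\<lambda>_. Re e) + 0\<^sub>m 1 m * 0\<^sub>m m 1) (1\<^sub>m 1 * 0\<^sub>m 1 m + 0\<^sub>m 1 m * dmat m d3)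
     (0\<^sub>m m 1 * dmat 1 (\<lambda>_. Re e) + U3 * 0\<^sub>m m 1) (0\<^sub>m m 1 * 0\<^sub>m 1 m + U3 * dmat m d3)"
    unfolding Dblk Bl_def
    by (rule mult_four_block_mat) (use U3 in auto)
  also have "\<dots> = four_block_mat (dmat 1 (\<lambda>_. Re e)) (0\<^sub>m 1 m) (0\<^sub>m m 1) (U3 * dmat m d3)"
    using U3 by simp
  finally have BD: "Bl * dmat n d = four_block_mat (dmat 1 (\<lambda>_. Re e)) (0\<^sub>m 1 m) (0\<^sub>m m 1) (U3 * dmat m d3)" .
  have UD3: "U3 * dmat m d3 \<in> carrier_mat m m" using U3 by simp
  have "Bl * dmat n d * adj Bl = four_block_mat (dmat 1 (\<lambda>_. Re e) * 1\<^sub>m 1 + 0\<^sub>m 1 m * 0\<^sub>m m 1) (dmat 1 (\<lambda>_. Re e) * 0\<^sub>m 1 m + 0\<^sub>m 1 m * adj U3)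
     (0\<^sub>m m 1 * 1\<^sub>m 1 + (U3 * dmat m d3) * 0\<^sub>m m 1) (0\<^sub>m m 1 * 0\<^sub>m 1 m + (U3 * dmat m d3) * adj U3)"
    unfolding BD adjBl
    by (rule mult_four_block_mat) (use U3 UD3 in auto)
  also have "\<dots> = four_block_mat (dmat 1 (\<lambda>_. Re e)) (0\<^sub>m 1 m) (0\<^sub>m m 1) A3"
    using U3 UD3 A3c by (simp add: A3e[symmetric])
  also have "\<dots> = A'"
  proof (rule eq_matI)
    fix i j assume i: "i < dim_row A'" and j: "j < dim_col A'"
    then have i': "i < n" and j': "j < n" using A'c by auto
    show "four_block_mat (dmat 1 (\<lambda>_. Re e)) (0\<^sub>m 1 m) (0\<^sub>m m 1) A3 $$ (i, j) = A' $$ (i,j)"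
      using i' j' Ai0[OF i'] A0j[OF j'] er eR unfolding n_def
      by (cases i; cases j) (auto simp: A3_def)
  qed (use A'c A3c n_def in auto)
  finally have A'e: "Bl * dmat n d * adj Bl = A'" .
  define U where "U = W * Bl"
  have uU: "unitary n U" unfolding U_def by (rule unitary_mult[OF uW uBl])
  have Dc: "dmat n d \<in> carrier_mat n n" by simp
  have aU: "adj U = adj Bl * adj W" unfolding U_def by (rule adj_mult[OF Wc Blc])
  have "U * dmat n d * adj U = W * (Bl * dmat n d * adj Bl) * adj W"
    unfolding aU unfolding U_def by (rule mult5_assoc) (use Wc Blc Dc in auto)
  also have "\<dots> = A" unfolding A'e A'_def by (rule conj_unitary[OF uW A])
  finally have "A = U * dmat n d * adj U" by simp
  with uU have fin: "unitary n U \<and> A = U * dmat n d * adj U" by simp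
  have "\<exists>U d. unitary n U \<and> A = U * dmat n d * adj U"
    apply (rule exI[where x=U])
    apply (rule exI[where x=d])
    apply (rule fin)
    done
  then show ?case unfolding n_def .
qed



lemma adj_mult_vec_carrier[simp]: "A \<in> carrier_mat n m \<Longrightarrow> v \<in> carrier_vec n \<Longrightarrow> adj A *\<^sub>v v \<in> carrier_vec m"
  by (rule mult_mat_vec_carrier[of _ m n]) auto

lemma dmat_mult_vec_carrier[simp]: "v \<in> carrier_vec n \<Longrightarrow> dmat n d *\<^sub>v v \<in> carrier_vec n"
  by (rule mult_mat_vec_carrier[of _ n n]) auto

lemma unit_back: assumes u: "unitary n U" and i: "i < n"
  shows "adj U *\<^sub>v (U *\<^sub>v unit_vec n i) = unit_vec n i"
proof -
  note U = unitaryD[OF u]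
  have "adj U *\<^sub>v (U *\<^sub>v unit_vec n i) = (adj U * U) *\<^sub>v unit_vec n i"
    by (rule assoc_mult_mat_vec[symmetric]) (use U in auto)
  then show ?thesis using U by simp
qed

lemma udu_mult_vec: assumes u: "unitary n U" and v: "v \<in> carrier_vec n"
  shows "(U * dmat n d * adj U) *\<^sub>v v = U *\<^sub>v (dmat n d *\<^sub>v (adj U *\<^sub>v v))"
proof -
  note U = unitaryD[OF u]
  have "(U * dmat n d * adj U) *\<^sub>v v = (U * dmat n d) *\<^sub>v (adj U *\<^sub>v v)"
    by (rule assoc_mult_mat_vec) (use U v in auto)
  also have "\<dots> = U *\<^sub>v (dmat n d *\<^sub>v (adj U *\<^sub>v v))"
    by (rule assoc_mult_mat_vec) (use U v in auto)
  finally show ?thesis .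
qed

lemma form_unit: assumes u: "unitary n U" and v: "v \<in> carrier_vec n"
  shows "conjugate v \<bullet> ((U * dmat n d * adj U) *\<^sub>v v) = complex_of_real (\<Sum>i<n. d i * (cmod ((adj U *\<^sub>v v) $ i))^2)"
proof -
  note U = unitaryD[OF u]
  have "conjugate v \<bullet> ((U * dmat n d * adj U) *\<^sub>v v) = conjugate v \<bullet> (U *\<^sub>v (dmat n d *\<^sub>v (adj U *\<^sub>v v)))"
    using udu_mult_vec[OF u v] by simp
  also have "\<dots> = conjugate (adj U *\<^sub>v v) \<bullet> (dmat n d *\<^sub>v (adj U *\<^sub>v v))"
    by (rule form_adj) (use U v in auto)
  also have "\<dots> = complex_of_real (\<Sum>i<n. d i * (cmod ((adj U *\<^sub>v v) $ i))^2)"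
    by (rule form_dmat) (use U v in auto)
  finally show ?thesis .
qed

lemma adj_udu: assumes u: "unitary n U"
  shows "adj (U * dmat n d * adj U) = U * dmat n d * adj U"
proof -
  note U = unitaryD[OF u]
  have "adj (U * dmat n d * adj U) = adj (adj U) * adj (U * dmat n d)"
    by (rule adj_mult[of _ n n _ n]) (use U in auto)
  also have "adj (U * dmat n d) = dmat n d * adj U"
    by (subst adj_mult[of _ n n _ n]) (use U in auto)
  also have "adj (adj U) * (dmat n d * adj U) = U * dmat n d * adj U"
    by (simp, rule mult3_assoc[of _ n, symmetric]) (use U in auto)
  finally show ?thesis .
qed

lemma udu_carrier: "unitary n U \<Longrightarrow> U * dmat n d * adj U \<in> carrier_mat n n"
  using unitaryD[of n U] by (metis dmat_carrier mult_carrier_mat)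

lemma psd_diag: assumes u: "unitary n U" and d: "\<And>i. i < n \<Longrightarrow> d i \<ge> 0"
  shows "psd_mat n (U * dmat n d * adj U)"
proof -
  have h: "hermitian_mat n (U * dmat n d * adj U)"
    unfolding hermitian_adj using adj_udu[OF u] udu_carrier[OF u] by simp
  have nn: "(\<Sum>i<n. d i * (cmod ((adj U *\<^sub>v v) $ i))^2) \<ge> 0" for v
    using d by (intro sum_nonneg) simp
  show ?thesis unfolding psd_mat_def using h form_unit[OF u] nn by simp
qed

lemma sum_unit: "i < n \<Longrightarrow> (\<Sum>k<n. d k * (cmod (unit_vec n i $ k))^2) = d i"
proof -
  assume i: "i < n"
  have "(\<Sum>k<n. d k * (cmod (unit_vec n i $ k))^2) = (\<Sum>k<n. if k = i then d i else 0)"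
    by (rule sum.cong) (use i in auto)
  also have "\<dots> = d i" using i by simp
  finally show ?thesis .
qed

lemma form_at_col: assumes u: "unitary n U" and i: "i < n"
  shows "conjugate (U *\<^sub>v unit_vec n i) \<bullet> ((U * dmat n d * adj U) *\<^sub>v (U *\<^sub>v unit_vec n i)) = complex_of_real (d i)"
proof -
  note U = unitaryD[OF u]
  have "U *\<^sub>v unit_vec n i \<in> carrier_vec n" using U by simp
  from form_unit[OF u this] show ?thesis unfolding unit_back[OF u i] sum_unit[OF i] .
qed

lemma psd_eig: assumes p: "psd_mat n A" and u: "unitary n U" and A: "A = U * dmat n d * adj U" and i: "i < n"
  shows "d i \<ge> 0"
proof -
  note U = unitaryD[OF u]
  have "U *\<^sub>v unit_vec n i \<in> carrier_vec n" using U by simp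
  then have "Re (conjugate (U *\<^sub>v unit_vec n i) \<bullet> (A *\<^sub>v (U *\<^sub>v unit_vec n i))) \<ge> 0"
    using p unfolding psd_mat_def by blast
  then show ?thesis using form_at_col[OF u i, of d] A by simp
qed

lemma psd_herm: "psd_mat n A \<Longrightarrow> A \<in> carrier_mat n n \<and> adj A = A"
  unfolding psd_mat_def hermitian_adj[symmetric] by simp

lemma diag_mult: assumes u: "unitary n U"
  shows "(U * dmat n a * adj U) * (U * dmat n b * adj U) = U * dmat n (\<lambda>i. a i * b i) * adj U"
proof -
  note U = unitaryD[OF u]
  let ?Da = "dmat n a" and ?Db = "dmat n b"
  have c: "?Da \<in> carrier_mat n n" "?Db \<in> carrier_mat n n" by auto
  have "adj U * (U * ?Db * adj U) = adj U * (U * ?Db) * adj U"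
    by (rule mult3_assoc[of _ n, symmetric]) (use U c in auto)
  also have "adj U * (U * ?Db) = adj U * U * ?Db"
    by (rule mult3_assoc[of _ n, symmetric]) (use U c in auto)
  also have "\<dots> = ?Db" using U c by simp
  finally have x: "adj U * (U * ?Db * adj U) = ?Db * adj U" .
  have "(U * ?Da * adj U) * (U * ?Db * adj U) = (U * ?Da) * (adj U * (U * ?Db * adj U))"
    by (rule mult3_assoc[of _ n]) (use U c in auto)
  also have "\<dots> = (U * ?Da) * (?Db * adj U)" using x by simp
  also have "\<dots> = U * ?Da * ?Db * adj U"
  proof -
    have "(U * ?Da) * (?Db * adj U) = (U * ?Da * ?Db) * adj U"
      by (rule mult3_assoc[of _ n, symmetric]) (use U c in auto)
    then show ?thesis by simp
  qed
  also have "U * ?Da * ?Db = U * (?Da * ?Db)"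
    by (rule mult3_assoc[of _ n]) (use U c in auto)
  finally show ?thesis by (simp add: dmat_mult)
qed

lemma sqrt_exists: assumes p: "psd_mat n A"
  shows "\<exists>S. psd_mat n S \<and> S * S = A"
proof -
  from psd_herm[OF p] have Ac: "A \<in> carrier_mat n n" and hA: "adj A = A" by auto
  from spectral[OF Ac hA] obtain U d where u: "unitary n U" and A: "A = U * dmat n d * adj U" by blast
  have d0: "\<And>i. i < n \<Longrightarrow> d i \<ge> 0" using psd_eig[OF p u A] by blast
  define S where "S = U * dmat n (\<lambda>i. sqrt (d i)) * adj U"
  have "psd_mat n S" unfolding S_def by (rule psd_diag[OF u]) (use d0 in simp)
  moreover have "S * S = U * dmat n (\<lambda>i. sqrt (d i) * sqrt (d i)) * adj U"
    unfolding S_def by (rule diag_mult[OF u])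
  moreover have "dmat n (\<lambda>i. sqrt (d i) * sqrt (d i)) = dmat n d"
    by (rule eq_matI) (use d0 in auto)
  ultimately show ?thesis using A by auto
qed



lemma psd_form_real: assumes p: "psd_mat n B" and w: "w \<in> carrier_vec n"
  shows "conjugate w \<bullet> (B *\<^sub>v w) = complex_of_real (Re (conjugate w \<bullet> (B *\<^sub>v w)))"
    and "Re (conjugate w \<bullet> (B *\<^sub>v w)) \<ge> 0"
  using p w unfolding psd_mat_def by (auto simp: complex_eq_iff)

lemma sqrt_unique: assumes pB: "psd_mat n B" and pC: "psd_mat n C" and eq: "B * B = C * C"
  shows "B = C"
proof -
  from psd_herm[OF pB] have Bc: "B \<in> carrier_mat n n" and hB: "adj B = B" by auto
  from psd_herm[OF pC] have Cc: "C \<in> carrier_mat n n" and hC: "adj C = C" by auto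
  define D where "D = B - C"
  have Dc: "D \<in> carrier_mat n n" using minus_carrier_mat[OF Cc] D_def by simp
  have hD: "adj D = D" unfolding D_def using adj_minus[OF Bc Cc] hB hC by simp
  from spectral[OF Dc hD] obtain W \<delta> where u: "unitary n W" and De: "D = W * dmat n \<delta> * adj W" by blast
  note W = unitaryD[OF u]
  have BDDC: "B * D + D * C = 0\<^sub>m n n"
  proof -
    have 1: "B * D = B * B - B * C" unfolding D_def by (rule mult_minus_distrib_mat[OF Bc Bc Cc])
    have 2: "D * C = B * C - C * C" unfolding D_def by (rule minus_mult_distrib_mat[OF Bc Cc Cc])
    show ?thesis unfolding 1 2 eq by (rule eq_matI) (use Bc Cc in auto)
  qed
  have "\<delta> i = 0" if i: "i < n" for i
  proof -
    define w where "w = W *\<^sub>v unit_vec n i"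
    have wc: "w \<in> carrier_vec n" using W w_def by simp
    have Dw: "D *\<^sub>v w = complex_of_real (\<delta> i) \<cdot>\<^sub>v w"
    proof -
      have "D *\<^sub>v w = W *\<^sub>v (dmat n \<delta> *\<^sub>v unit_vec n i)"
        unfolding De using udu_mult_vec[OF u wc] unit_back[OF u i] w_def by simp
      also have "dmat n \<delta> *\<^sub>v unit_vec n i = complex_of_real (\<delta> i) \<cdot>\<^sub>v unit_vec n i"
        by (rule eq_vecI) (use i in \<open>auto simp: dmat_mult_vec\<close>)
      also have "W *\<^sub>v (complex_of_real (\<delta> i) \<cdot>\<^sub>v unit_vec n i) = complex_of_real (\<delta> i) \<cdot>\<^sub>v w"
        unfolding w_def by (rule mult_mat_vec) (use W in auto)
      finally show ?thesis .
    qed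
    define qB where "qB = conjugate w \<bullet> (B *\<^sub>v w)"
    define qC where "qC = conjugate w \<bullet> (C *\<^sub>v w)"
    have qD: "conjugate w \<bullet> (D *\<^sub>v w) = complex_of_real (\<delta> i)"
      unfolding De w_def by (rule form_at_col[OF u i])
    have qD2: "conjugate w \<bullet> (D *\<^sub>v w) = qB - qC"
      unfolding D_def qB_def qC_def using Bc Cc wc
      by (simp add: minus_mult_distrib_mat_vec[OF Bc Cc wc] scalar_prod_minus_distrib[of _ n])
    have c1: "conjugate w \<bullet> (B *\<^sub>v (D *\<^sub>v w)) = complex_of_real (\<delta> i) * qB"
      unfolding Dw qB_def using Bc wc by (simp add: mult_mat_vec[OF Bc wc])
    have c2: "conjugate w \<bullet> (D *\<^sub>v (C *\<^sub>v w)) = complex_of_real (\<delta> i) * qC"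
    proof -
      have "conjugate w \<bullet> (D *\<^sub>v (C *\<^sub>v w)) = conjugate (adj D *\<^sub>v w) \<bullet> (C *\<^sub>v w)"
        by (rule form_adj) (use Dc Cc wc in auto)
      also have "\<dots> = conjugate (complex_of_real (\<delta> i) \<cdot>\<^sub>v w) \<bullet> (C *\<^sub>v w)" using hD Dw by simp
      also have "\<dots> = complex_of_real (\<delta> i) * qC"
        unfolding qC_def using Cc wc by (simp add: conjugate_smult_vec)
      finally show ?thesis .
    qed
    have "(B * D + D * C) *\<^sub>v w = B *\<^sub>v (D *\<^sub>v w) + D *\<^sub>v (C *\<^sub>v w)"
      using Bc Cc Dc wc
      by (simp add: add_mult_distrib_mat_vec[of _ n n] assoc_mult_mat_vec[of _ n n _ n])
    moreover have "0\<^sub>m n n *\<^sub>v w = 0\<^sub>v n"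
      by (rule eq_vecI) (use wc in \<open>auto simp: mult_mat_vec_def scalar_prod_def\<close>)
    ultimately have "B *\<^sub>v (D *\<^sub>v w) + D *\<^sub>v (C *\<^sub>v w) = 0\<^sub>v n" using BDDC by simp
    then have "conjugate w \<bullet> (B *\<^sub>v (D *\<^sub>v w) + D *\<^sub>v (C *\<^sub>v w)) = 0" using wc by simp
    then have ce: "complex_of_real (\<delta> i) * qB + complex_of_real (\<delta> i) * qC = 0"
      using c1 c2 Bc Cc Dc wc by (simp add: scalar_prod_add_distrib[of _ n])
    have e1: "\<delta> i * Re qB + \<delta> i * Re qC = 0"
      using arg_cong[OF ce, of Re] by simp
    have e2: "\<delta> i = Re qB - Re qC" using arg_cong[OF qD[symmetric], of Re] qD2 by simp
    have nB: "Re qB \<ge> 0" unfolding qB_def by (rule psd_form_real(2)[OF pB wc])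
    have nC: "Re qC \<ge> 0" unfolding qC_def by (rule psd_form_real(2)[OF pC wc])
    have "\<delta> i = 0 \<or> Re qB + Re qC = 0" using e1 by (simp add: distrib_left[symmetric])
    then show "\<delta> i = 0" using e2 nB nC by auto
  qed
  then have "dmat n \<delta> = 0\<^sub>m n n" by (intro eq_matI) auto
  then have "D = 0\<^sub>m n n" using De W by simp
  then show "B = C"
  proof -
    assume z: "D = 0\<^sub>m n n"
    show "B = C"
    proof (rule eq_matI)
      fix i j assume "i < dim_row C" "j < dim_col C"
      then have ij: "i < n" "j < n" using Cc by auto
      have "D $$ (i,j) = 0" using z ij by simp
      then show "B $$ (i,j) = C $$ (i,j)" using ij Bc Cc unfolding D_def by simp
    qed (use Bc Cc in auto)
  qed
qed

lemma mat_sqrt: assumes p: "psd_mat n A"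
  shows "psd_mat n (mat_sqrt n A)" "mat_sqrt n A * mat_sqrt n A = A"
proof -
  have "\<exists>!S. psd_mat n S \<and> S * S = A"
    using sqrt_exists[OF p] sqrt_unique by blast
  then have "psd_mat n (mat_sqrt n A) \<and> mat_sqrt n A * mat_sqrt n A = A"
    unfolding mat_sqrt_def by (rule theI')
  then show "psd_mat n (mat_sqrt n A)" "mat_sqrt n A * mat_sqrt n A = A" by auto
qed

lemma mat_sqrt_eq: assumes p: "psd_mat n A" and S: "psd_mat n S" "S * S = A"
  shows "mat_sqrt n A = S"
  using sqrt_unique[OF mat_sqrt(1)[OF p] S(1)] mat_sqrt(2)[OF p] S(2) by simp



lemma key2:
  fixes a b c d p :: real
  assumes "a \<ge> 0" "b \<ge> 0" "c \<ge> 0" "d \<ge> 0" "0 \<le> p" "p \<le> 1"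
  shows "p*a*c + (1-p)*b*d \<le> sqrt (p*a^2 + (1-p)*b^2) * sqrt (p*c^2 + (1-p)*d^2)"
    and "p*a*c + (1-p)*b*d = sqrt (p*a^2 + (1-p)*b^2) * sqrt (p*c^2 + (1-p)*d^2) \<Longrightarrow> 0 < p \<Longrightarrow> p < 1 \<Longrightarrow> a*d = b*c"
proof -
  have id: "(p*a^2 + (1-p)*b^2) * (p*c^2 + (1-p)*d^2) - (p*a*c + (1-p)*b*d)^2 = p*(1-p)*(a*d - b*c)^2"
    by (simp add: power2_eq_square algebra_simps)
  have nn1: "p*a^2 + (1-p)*b^2 \<ge> 0" and nn2: "p*c^2 + (1-p)*d^2 \<ge> 0" using assms by auto
  have r: "sqrt (p*a^2 + (1-p)*b^2) * sqrt (p*c^2 + (1-p)*d^2) = sqrt ((p*a^2 + (1-p)*b^2) * (p*c^2 + (1-p)*d^2))"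
    by (simp add: real_sqrt_mult)
  have "(p*a*c + (1-p)*b*d)^2 \<le> (p*a^2 + (1-p)*b^2) * (p*c^2 + (1-p)*d^2)"
    using id assms by (smt (verit) mult_nonneg_nonneg zero_le_power2)
  then show "p*a*c + (1-p)*b*d \<le> sqrt (p*a^2 + (1-p)*b^2) * sqrt (p*c^2 + (1-p)*d^2)"
    unfolding r by (rule real_le_rsqrt)
  assume eq: "p*a*c + (1-p)*b*d = sqrt (p*a^2 + (1-p)*b^2) * sqrt (p*c^2 + (1-p)*d^2)" and p: "0 < p" "p < 1"
  have lnn: "p*a*c + (1-p)*b*d \<ge> 0" using assms by auto
  have "(p*a*c + (1-p)*b*d)^2 = (p*a^2 + (1-p)*b^2) * (p*c^2 + (1-p)*d^2)"
    using eq unfolding r using nn1 nn2 by (simp add: mult_nonneg_nonneg)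
  then have "p*(1-p)*(a*d - b*c)^2 = 0" using id by simp
  then show "a*d = b*c" using p by simp
qed

lemma abs_sum_le_sqrt:
  fixes s a :: "nat \<Rightarrow> real"
  assumes "\<And>i. i < n \<Longrightarrow> (s i)^2 \<le> a i"
  shows "\<bar>\<Sum>i<n. s i\<bar> \<le> (\<Sum>i<n. sqrt (a i))"
    and "\<bar>\<Sum>i<n. s i\<bar> = (\<Sum>i<n. sqrt (a i)) \<Longrightarrow> i < n \<Longrightarrow> (s i)^2 = a i"
proof -
  have le: "\<And>i. i < n \<Longrightarrow> \<bar>s i\<bar> \<le> sqrt (a i)"
    using assms real_sqrt_le_mono[of "(s _)^2"] by fastforce
  have "\<bar>\<Sum>i<n. s i\<bar> \<le> (\<Sum>i<n. \<bar>s i\<bar>)" by (rule sum_abs)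
  also have "\<dots> \<le> (\<Sum>i<n. sqrt (a i))" by (rule sum_mono) (use le in auto)
  finally show "\<bar>\<Sum>i<n. s i\<bar> \<le> (\<Sum>i<n. sqrt (a i))" .
  assume eq: "\<bar>\<Sum>i<n. s i\<bar> = (\<Sum>i<n. sqrt (a i))" and i: "i < n"
  have "(\<Sum>i<n. sqrt (a i)) \<le> (\<Sum>i<n. \<bar>s i\<bar>)" using eq sum_abs[of s "{..<n}"] by simp
  then have "(\<Sum>i<n. sqrt (a i) - \<bar>s i\<bar>) = 0"
    using sum_mono[of "{..<n}" "\<lambda>i. \<bar>s i\<bar>" "\<lambda>i. sqrt (a i)"] le by (simp add: sum_subtractf)
  then have "\<forall>i\<in>{..<n}. sqrt (a i) - \<bar>s i\<bar> = 0"
    by (subst sum_nonneg_eq_0_iff[symmetric]) (use le in auto)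
  then have "\<bar>s i\<bar> = sqrt (a i)" using i by auto
  moreover have "a i \<ge> 0" using assms[OF i] by (smt (verit) zero_le_power2)
  ultimately show "(s i)^2 = a i" by (metis power2_abs real_sqrt_pow2)
qed

lemma real_key:
  fixes \<alpha> \<beta> s t :: "nat \<Rightarrow> real" and p :: real
  assumes a0: "\<And>i. i < n \<Longrightarrow> \<alpha> i \<ge> 0" and b0: "\<And>i. i < n \<Longrightarrow> \<beta> i \<ge> 0"
    and sa: "(\<Sum>i<n. \<alpha> i) = 1" and sb: "(\<Sum>i<n. \<beta> i) = 1"
    and sl: "\<And>i. i < n \<Longrightarrow> (s i)^2 \<le> \<alpha> i" and tl: "\<And>i. i < n \<Longrightarrow> (t i)^2 \<le> \<beta> i"
    and p: "0 < p" "p < 1"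
  shows "p * (\<Sum>i<n. s i)^2 + (1-p) * (\<Sum>i<n. t i)^2 \<le> (\<Sum>i<n. sqrt (p * \<alpha> i + (1-p) * \<beta> i))^2"
    and "p * (\<Sum>i<n. s i)^2 + (1-p) * (\<Sum>i<n. t i)^2 = (\<Sum>i<n. sqrt (p * \<alpha> i + (1-p) * \<beta> i))^2
         \<Longrightarrow> (\<forall>i<n. \<alpha> i = \<beta> i \<and> (s i)^2 = \<alpha> i \<and> (t i)^2 = \<beta> i)"
proof -
  define u where "u i = sqrt (\<alpha> i)" for i
  define v where "v i = sqrt (\<beta> i)" for i
  define g where "g i = sqrt (p * \<alpha> i + (1-p) * \<beta> i)" for i
  have u0: "\<And>i. i < n \<Longrightarrow> u i \<ge> 0" and v0: "\<And>i. i < n \<Longrightarrow> v i \<ge> 0" unfolding u_def v_def using a0 b0 by auto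
  have uu: "\<And>i. i < n \<Longrightarrow> (u i)^2 = \<alpha> i" using a0 unfolding u_def by simp
  have vv: "\<And>i. i < n \<Longrightarrow> (v i)^2 = \<beta> i" using b0 unfolding v_def by simp
  have gi: "\<And>i. i < n \<Longrightarrow> g i = sqrt (p * (u i)^2 + (1-p) * (v i)^2)" unfolding g_def using uu vv by simp
  have s1: "\<bar>\<Sum>i<n. s i\<bar> \<le> (\<Sum>i<n. u i)" using abs_sum_le_sqrt(1)[OF sl] unfolding u_def by simp
  have t1: "\<bar>\<Sum>i<n. t i\<bar> \<le> (\<Sum>i<n. v i)" using abs_sum_le_sqrt(1)[OF tl] unfolding v_def by simp
  have su: "(\<Sum>i<n. s i)^2 \<le> (\<Sum>i<n. u i)^2"
    using s1 abs_le_square_iff[of "\<Sum>i<n. s i" "\<Sum>i<n. u i"] u0 by (simp add: sum_nonneg)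
  have tv: "(\<Sum>i<n. t i)^2 \<le> (\<Sum>i<n. v i)^2"
    using t1 abs_le_square_iff[of "\<Sum>i<n. t i" "\<Sum>i<n. v i"] v0 by (simp add: sum_nonneg)
  have XY: "p * (\<Sum>i<n. s i)^2 + (1-p) * (\<Sum>i<n. t i)^2 \<le> p * (\<Sum>i<n. u i)^2 + (1-p) * (\<Sum>i<n. v i)^2"
    using su tv p by (smt (verit) mult_left_mono)
  have tm: "\<And>i j. i < n \<Longrightarrow> j < n \<Longrightarrow> p * (u i * u j) + (1-p) * (v i * v j) \<le> g i * g j"
  proof -
    fix i j assume i: "i < n" and j: "j < n"
    show "p * (u i * u j) + (1-p) * (v i * v j) \<le> g i * g j"
      using key2(1)[OF u0[OF i] v0[OF i] u0[OF j] v0[OF j]] p gi[OF i] gi[OF j] by (simp add: mult.assoc)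
  qed
  have sq: "\<And>f::nat\<Rightarrow>real. (\<Sum>i<n. f i)^2 = (\<Sum>i<n. \<Sum>j<n. f i * f j)"
    by (simp add: power2_eq_square sum_product)
  have Yexp: "p * (\<Sum>i<n. u i)^2 + (1-p) * (\<Sum>i<n. v i)^2 = (\<Sum>i<n. \<Sum>j<n. p * (u i * u j) + (1-p) * (v i * v j))"
    unfolding sq by (simp add: sum_distrib_left sum.distrib)
  have Zexp: "(\<Sum>i<n. g i)^2 = (\<Sum>i<n. \<Sum>j<n. g i * g j)"
    by (rule sq)
  have YZ: "p * (\<Sum>i<n. u i)^2 + (1-p) * (\<Sum>i<n. v i)^2 \<le> (\<Sum>i<n. g i)^2"
    unfolding Yexp Zexp by (intro sum_mono) (use tm in auto)
  show "p * (\<Sum>i<n. s i)^2 + (1-p) * (\<Sum>i<n. t i)^2 \<le> (\<Sum>i<n. sqrt (p * \<alpha> i + (1-p) * \<beta> i))^2"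
    using XY YZ unfolding g_def by simp
  assume eq: "p * (\<Sum>i<n. s i)^2 + (1-p) * (\<Sum>i<n. t i)^2 = (\<Sum>i<n. sqrt (p * \<alpha> i + (1-p) * \<beta> i))^2"
  then have eq': "p * (\<Sum>i<n. s i)^2 + (1-p) * (\<Sum>i<n. t i)^2 = (\<Sum>i<n. g i)^2" unfolding g_def by simp
  have XYe: "(\<Sum>i<n. s i)^2 = (\<Sum>i<n. u i)^2" "(\<Sum>i<n. t i)^2 = (\<Sum>i<n. v i)^2"
    using eq' XY YZ su tv p by (smt (verit) mult_strict_left_mono)+
  have YZe: "(\<Sum>i<n. \<Sum>j<n. g i * g j - (p * (u i * u j) + (1-p) * (v i * v j))) = 0"
    using eq' XY YZ unfolding Yexp Zexp by (simp add: sum_subtractf)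
  have tnn: "\<And>i j. i < n \<Longrightarrow> j < n \<Longrightarrow> g i * g j - (p * (u i * u j) + (1-p) * (v i * v j)) \<ge> 0"
    using tm by simp
  have "\<forall>i\<in>{..<n}. (\<Sum>j<n. g i * g j - (p * (u i * u j) + (1-p) * (v i * v j))) = 0"
    by (subst sum_nonneg_eq_0_iff[symmetric]) (use YZe tnn in \<open>auto intro!: sum_nonneg\<close>)
  then have "\<And>i j. i < n \<Longrightarrow> j < n \<Longrightarrow> g i * g j - (p * (u i * u j) + (1-p) * (v i * v j)) = 0"
  proof -
    fix i j assume all: "\<forall>i\<in>{..<n}. (\<Sum>j<n. g i * g j - (p * (u i * u j) + (1-p) * (v i * v j))) = 0"
      and i: "i < n" and j: "j < n"
    define h where "h j = g i * g j - (p * (u i * u j) + (1-p) * (v i * v j))" for j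
    have "sum h {..<n} = 0" using all i unfolding h_def by auto
    then have "\<forall>j\<in>{..<n}. h j = 0" using sum_nonneg_eq_0_iff[of "{..<n}" h] tnn[OF i] unfolding h_def by auto
    then show "g i * g j - (p * (u i * u j) + (1-p) * (v i * v j)) = 0" using j unfolding h_def by auto
  qed
  then have cross: "\<And>i j. i < n \<Longrightarrow> j < n \<Longrightarrow> u i * v j = v i * u j"
  proof -
    fix i j assume z: "\<And>i j. i < n \<Longrightarrow> j < n \<Longrightarrow> g i * g j - (p * (u i * u j) + (1-p) * (v i * v j)) = 0"
      and i: "i < n" and j: "j < n"
    show "u i * v j = v i * u j"
    proof -
      have e: "p*(u i)*(u j) + (1-p)*(v i)*(v j) = sqrt (p*(u i)^2 + (1-p)*(v i)^2) * sqrt (p*(u j)^2 + (1-p)*(v j)^2)"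
        using z[OF i j] gi[OF i] gi[OF j] by (simp add: mult.assoc)
      have p0: "0 \<le> p" and p1: "p \<le> 1" using p by auto
      show ?thesis using key2(2)[OF u0[OF i] v0[OF i] u0[OF j] v0[OF j] p0 p1 e p(1) p(2)] .
    qed
  qed
  define k where "k = (\<Sum>i<n. u i * v i)"
  have k0: "k \<ge> 0" unfolding k_def using u0 v0 by (intro sum_nonneg) simp
  have su2: "(\<Sum>i<n. (u i)^2) = 1" using uu sa by simp
  have sv2: "(\<Sum>i<n. (v i)^2) = 1" using vv sb by simp
  have vk: "\<And>j. j < n \<Longrightarrow> v j = k * u j"
  proof -
    fix j assume j: "j < n"
    have "v j = (\<Sum>i<n. (u i)^2) * v j" using su2 by simp
    also have "\<dots> = (\<Sum>i<n. u i * (u i * v j))" by (simp add: sum_distrib_right power2_eq_square mult.assoc)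
    also have "\<dots> = (\<Sum>i<n. u i * (v i * u j))" using cross j by (intro sum.cong) auto
    also have "\<dots> = k * u j" unfolding k_def by (simp add: sum_distrib_right mult.assoc)
    finally show "v j = k * u j" .
  qed
  have "1 = (\<Sum>j<n. (k * u j)^2)" using sv2 vk by simp
  also have "\<dots> = k^2" using su2 by (simp add: power_mult_distrib sum_distrib_left[symmetric])
  finally have "k = 1" using k0 power2_eq_1_iff[of k] by auto
  then have uv: "\<And>j. j < n \<Longrightarrow> v j = u j" using vk by simp
  have se: "\<And>i. i < n \<Longrightarrow> (s i)^2 = \<alpha> i"
  proof -
    fix i assume i: "i < n"
    have nn: "(\<Sum>i<n. u i) \<ge> 0" using u0 by (intro sum_nonneg) simp
    have "\<bar>\<Sum>i<n. s i\<bar> = (\<Sum>i<n. u i)"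
      using power2_eq_iff_nonneg[of "\<bar>\<Sum>i<n. s i\<bar>" "\<Sum>i<n. u i"] XYe(1) nn by simp
    then have ee: "\<bar>\<Sum>i<n. s i\<bar> = (\<Sum>i<n. sqrt (\<alpha> i))" unfolding u_def .
    show "(s i)^2 = \<alpha> i" by (rule abs_sum_le_sqrt(2)[of n s \<alpha>, OF sl ee i])
  qed
  have te: "\<And>i. i < n \<Longrightarrow> (t i)^2 = \<beta> i"
  proof -
    fix i assume i: "i < n"
    have nn: "(\<Sum>i<n. v i) \<ge> 0" using v0 by (intro sum_nonneg) simp
    have "\<bar>\<Sum>i<n. t i\<bar> = (\<Sum>i<n. v i)"
      using power2_eq_iff_nonneg[of "\<bar>\<Sum>i<n. t i\<bar>" "\<Sum>i<n. v i"] XYe(2) nn by simp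
    then have ee: "\<bar>\<Sum>i<n. t i\<bar> = (\<Sum>i<n. sqrt (\<beta> i))" unfolding v_def .
    show "(t i)^2 = \<beta> i" by (rule abs_sum_le_sqrt(2)[of n t \<beta>, OF tl ee i])
  qed
  show "\<forall>i<n. \<alpha> i = \<beta> i \<and> (s i)^2 = \<alpha> i \<and> (t i)^2 = \<beta> i"
    using uv uu vv se te by metis
qed



lemma conj_mult: assumes u: "unitary n U" and X: "X \<in> carrier_mat n n" and Y: "Y \<in> carrier_mat n n"
  shows "(adj U * X * U) * (adj U * Y * U) = adj U * (X * Y) * U"
proof -
  note U = unitaryD[OF u]
  have "U * (adj U * Y * U) = U * adj U * Y * U"
  proof -
    have "U * (adj U * Y * U) = U * (adj U * Y) * U" by (rule mult3_assoc[of _ n, symmetric]) (use U Y in auto)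
    also have "U * (adj U * Y) = U * adj U * Y" by (rule mult3_assoc[of _ n, symmetric]) (use U Y in auto)
    finally show ?thesis .
  qed
  also have "U * adj U * Y * U = Y * U" using U Y by (simp only: U(4) left_mult_one_mat[OF Y])
  finally have x: "U * (adj U * Y * U) = Y * U" .
  have "(adj U * X * U) * (adj U * Y * U) = (adj U * X) * (U * (adj U * Y * U))"
    by (rule mult3_assoc[of _ n]) (use U X Y in auto)
  also have "\<dots> = (adj U * X) * (Y * U)" using x by simp
  also have "\<dots> = adj U * X * Y * U" by (rule mult3_assoc[of _ n, symmetric]) (use U X Y in auto)
  also have "adj U * X * Y = adj U * (X * Y)" by (rule mult3_assoc[of _ n]) (use U X Y in auto)
  finally show ?thesis .
qed

lemma conj_carrier: "unitary n U \<Longrightarrow> X \<in> carrier_mat n n \<Longrightarrow> adj U * X * U \<in> carrier_mat n n"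
  using unitaryD[of n U] by (metis mult_carrier_mat)

lemma conj_adj: assumes u: "unitary n U" and X: "X \<in> carrier_mat n n" and h: "adj X = X"
  shows "adj (adj U * X * U) = adj U * X * U"
proof -
  note U = unitaryD[OF u]
  have "adj (adj U * X * U) = adj U * adj (adj U * X)"
    by (rule adj_mult[of _ n n _ n]) (use U X in auto)
  also have "adj (adj U * X) = X * U"
    by (subst adj_mult[of _ n n _ n]) (use U X h in auto)
  finally show ?thesis using U X by (simp add: mult3_assoc[of _ n])
qed

lemma mtrace_conj: assumes u: "unitary n U" and X: "X \<in> carrier_mat n n"
  shows "mtrace (adj U * X * U) = mtrace X"
proof -
  note U = unitaryD[OF u]
  have "mtrace ((adj U * X) * U) = mtrace (U * (adj U * X))"
    by (rule mtrace_cyclic[of _ n n]) (use U X in auto)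
  also have "U * (adj U * X) = U * adj U * X" by (rule mult3_assoc[of _ n, symmetric]) (use U X in auto)
  finally have "mtrace (adj U * X * U) = mtrace (U * adj U * X)" .
  then show ?thesis by (simp only: U(4) left_mult_one_mat[OF X])
qed

lemma conj_back: assumes u: "unitary n U" and X: "X \<in> carrier_mat n n"
  shows "adj U * (U * X * adj U) * U = X"
proof -
  have u': "unitary n (adj U)" using unitaryD[OF u] by (simp add: unitary_def)
  show ?thesis using conj_unitary[OF u' X] by simp
qed

lemma analysis:
  assumes dX: "density_mat n X" and u: "unitary n U"
  defines "Xt \<equiv> adj U * X * U" and "St \<equiv> adj U * mat_sqrt n X * U"
  shows "\<And>i. i < n \<Longrightarrow> Xt $$ (i,i) = complex_of_real (\<Sum>k<n. (cmod (St $$ (i,k)))^2)"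
    and "(\<Sum>i<n. Re (Xt $$ (i,i))) = 1"
    and "Re (mtrace (mat_sqrt n X)) = (\<Sum>i<n. Re (St $$ (i,i)))"
    and "\<And>i. i < n \<Longrightarrow> (Re (St $$ (i,i)))^2 \<le> Re (Xt $$ (i,i))"
    and "(\<And>i. i < n \<Longrightarrow> (Re (St $$ (i,i)))^2 = Re (Xt $$ (i,i))) \<Longrightarrow> Xt = dmat n (\<lambda>i. Re (Xt $$ (i,i)))"
proof -
  note U = unitaryD[OF u]
  have pX: "psd_mat n X" and tX: "mtrace X = 1" using dX unfolding density_mat_def by auto
  from psd_herm[OF pX] have Xc: "X \<in> carrier_mat n n" by auto
  define S where "S = mat_sqrt n X"
  have pS: "psd_mat n S" and SS: "S * S = X" using mat_sqrt[OF pX] S_def by auto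
  from psd_herm[OF pS] have Sc: "S \<in> carrier_mat n n" and hS: "adj S = S" by auto
  have Stc: "St \<in> carrier_mat n n" unfolding St_def S_def[symmetric] by (rule conj_carrier[OF u Sc])
  have hSt: "adj St = St" unfolding St_def S_def[symmetric] by (rule conj_adj[OF u Sc hS])
  have "St * St = adj U * (S * S) * U" unfolding St_def S_def[symmetric]
    by (rule conj_mult[OF u Sc Sc])
  then have StSt: "St * St = Xt" unfolding Xt_def SS .
  have Stsym: "\<And>i k. i < n \<Longrightarrow> k < n \<Longrightarrow> St $$ (k,i) = cnj (St $$ (i,k))"
  proof -
    fix i k assume "i < n" "k < n"
    then have "adj St $$ (k,i) = cnj (St $$ (i,k))" using Stc by simp
    then show "St $$ (k,i) = cnj (St $$ (i,k))" using hSt by simp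
  qed
  have Xtij: "\<And>i j. i < n \<Longrightarrow> j < n \<Longrightarrow> Xt $$ (i,j) = (\<Sum>k<n. St $$ (i,k) * St $$ (k,j))"
  proof -
    fix i j assume "i < n" "j < n"
    then show "Xt $$ (i,j) = (\<Sum>k<n. St $$ (i,k) * St $$ (k,j))"
      unfolding StSt[symmetric] using Stc by (simp add: scalar_prod_def row_def col_def atLeast0LessThan)
  qed
  show diag: "\<And>i. i < n \<Longrightarrow> Xt $$ (i,i) = complex_of_real (\<Sum>k<n. (cmod (St $$ (i,k)))^2)"
  proof -
    fix i assume i: "i < n"
    have "Xt $$ (i,i) = (\<Sum>k<n. St $$ (i,k) * St $$ (k,i))" by (rule Xtij[OF i i])
    also have "\<dots> = (\<Sum>k<n. St $$ (i,k) * cnj (St $$ (i,k)))"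
    proof (rule sum.cong[OF refl])
      fix k assume "k \<in> {..<n}"
      then have "St $$ (k,i) = cnj (St $$ (i,k))" using Stsym[OF i] by blast
      then show "St $$ (i,k) * St $$ (k,i) = St $$ (i,k) * cnj (St $$ (i,k))" by (rule arg_cong)
    qed
    also have "\<dots> = (\<Sum>k<n. complex_of_real ((cmod (St $$ (i,k)))^2))"
      by (simp only: complex_norm_square)
    finally show "Xt $$ (i,i) = complex_of_real (\<Sum>k<n. (cmod (St $$ (i,k)))^2)" by simp
  qed
  have Xtc: "Xt \<in> carrier_mat n n" unfolding Xt_def by (rule conj_carrier[OF u Xc])
  have "mtrace Xt = 1" unfolding Xt_def using mtrace_conj[OF u Xc] tX by simp
  moreover have "mtrace Xt = (\<Sum>i<n. Xt $$ (i,i))" using Xtc by (simp add: mtrace_def)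
  ultimately show "(\<Sum>i<n. Re (Xt $$ (i,i))) = 1" by (metis Re_sum one_complex.sel(1))
  have "mtrace St = mtrace S" unfolding St_def S_def[symmetric] by (rule mtrace_conj[OF u Sc])
  moreover have "mtrace St = (\<Sum>i<n. St $$ (i,i))" using Stc by (simp add: mtrace_def)
  ultimately show "Re (mtrace (mat_sqrt n X)) = (\<Sum>i<n. Re (St $$ (i,i)))"
    unfolding S_def[symmetric] by (metis Re_sum)
  have ReX: "\<And>i. i < n \<Longrightarrow> Re (Xt $$ (i,i)) = (\<Sum>k<n. (cmod (St $$ (i,k)))^2)"
    using diag by simp
  have rem: "\<And>i. i < n \<Longrightarrow> (\<Sum>k<n. (cmod (St $$ (i,k)))^2) = (cmod (St $$ (i,i)))^2 + (\<Sum>k\<in>{..<n}-{i}. (cmod (St $$ (i,k)))^2)"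
    by (subst sum.remove[of "{..<n}"]) auto
  have Recm: "\<And>z. (Re z)^2 \<le> (cmod z)^2"
    by (simp add: abs_Re_le_cmod abs_le_square_iff[symmetric])
  show "\<And>i. i < n \<Longrightarrow> (Re (St $$ (i,i)))^2 \<le> Re (Xt $$ (i,i))"
  proof -
    fix i assume i: "i < n"
    have "(\<Sum>k\<in>{..<n}-{i}. (cmod (St $$ (i,k)))^2) \<ge> 0" by (rule sum_nonneg) simp
    then show "(Re (St $$ (i,i)))^2 \<le> Re (Xt $$ (i,i))"
      using ReX[OF i] rem[OF i] Recm[of "St $$ (i,i)"] by linarith
  qed
  assume eqa: "\<And>i. i < n \<Longrightarrow> (Re (St $$ (i,i)))^2 = Re (Xt $$ (i,i))"
  have off: "\<And>i k. i < n \<Longrightarrow> k < n \<Longrightarrow> k \<noteq> i \<Longrightarrow> St $$ (i,k) = 0"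
  proof -
    fix i k assume i: "i < n" and k: "k < n" and ki: "k \<noteq> i"
    have z: "(\<Sum>k\<in>{..<n}-{i}. (cmod (St $$ (i,k)))^2) = 0"
    proof -
      have "(\<Sum>k\<in>{..<n}-{i}. (cmod (St $$ (i,k)))^2) \<ge> 0" by (rule sum_nonneg) simp
      then show ?thesis using eqa[OF i] ReX[OF i] rem[OF i] Recm[of "St $$ (i,i)"] by linarith
    qed
    have "\<forall>k\<in>{..<n}-{i}. (cmod (St $$ (i,k)))^2 = 0"
      using sum_nonneg_eq_0_iff[of "{..<n}-{i}" "\<lambda>k. (cmod (St $$ (i,k)))^2"] z by simp
    then show "St $$ (i,k) = 0" using k ki by simp
  qed
  show "Xt = dmat n (\<lambda>i. Re (Xt $$ (i,i)))"
  proof (rule eq_matI)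
    fix i j assume ij: "i < dim_row (dmat n (\<lambda>i. Re (Xt $$ (i,i))))" "j < dim_col (dmat n (\<lambda>i. Re (Xt $$ (i,i))))"
    then have i: "i < n" and j: "j < n" by auto
    show "Xt $$ (i,j) = dmat n (\<lambda>i. Re (Xt $$ (i,i))) $$ (i,j)"
    proof (cases "i = j")
      case True
      then show ?thesis using diag[OF i] i by simp
    next
      case False
      have "Xt $$ (i,j) = (\<Sum>k<n. St $$ (i,k) * St $$ (k,j))" by (rule Xtij[OF i j])
      also have "\<dots> = 0"
      proof (rule sum.neutral, intro ballI)
        fix k assume k: "k \<in> {..<n}"
        show "St $$ (i,k) * St $$ (k,j) = 0"
        proof (cases "k = i")
          case True then show ?thesis using off[OF i j] False by simp
        next
          case False then show ?thesis using off[OF i] k by simp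
        qed
      qed
      finally show ?thesis using False i j by simp
    qed
  qed (use Xtc in auto)
qed



theorem mainTheorem3:
  fixes n :: nat and \<rho>1 \<rho>2 :: "complex mat" and p :: real
  assumes "density_mat n \<rho>1" and "density_mat n \<rho>2"
    and "\<rho>1 \<noteq> \<rho>2"
    and "0 < p" and "p < 1"
  shows "hN n (complex_of_real p \<cdot>\<^sub>m \<rho>1 + complex_of_real (1 - p) \<cdot>\<^sub>m \<rho>2)
           > p * hN n \<rho>1 + (1 - p) * hN n \<rho>2"
proof -
  note dA = assms(1) and dB = assms(2) and ne = assms(3) and p = assms(4,5)
  have pA: "psd_mat n \<rho>1" and pB: "psd_mat n \<rho>2" using dA dB unfolding density_mat_def by auto
  from psd_herm[OF pA] have Ac: "\<rho>1 \<in> carrier_mat n n" and hA: "adj \<rho>1 = \<rho>1" by auto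
  from psd_herm[OF pB] have Bc: "\<rho>2 \<in> carrier_mat n n" and hB: "adj \<rho>2 = \<rho>2" by auto
  define C where "C = complex_of_real p \<cdot>\<^sub>m \<rho>1 + complex_of_real (1 - p) \<cdot>\<^sub>m \<rho>2"
  have pAc: "complex_of_real p \<cdot>\<^sub>m \<rho>1 \<in> carrier_mat n n" using Ac by simp
  have pBc: "complex_of_real (1 - p) \<cdot>\<^sub>m \<rho>2 \<in> carrier_mat n n" using Bc by simp
  have Cc: "C \<in> carrier_mat n n" unfolding C_def using pAc pBc by simp
  have hC: "adj C = C"
    unfolding C_def adj_add[OF pAc pBc] adj_smult using hA hB by simp
  from spectral[OF Cc hC] obtain U \<gamma> where u: "unitary n U" and Ce: "C = U * dmat n \<gamma> * adj U" by blast
  note Ud = unitaryD[OF u]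
  define At where "At = adj U * \<rho>1 * U"
  define Bt where "Bt = adj U * \<rho>2 * U"
  define SAt where "SAt = adj U * mat_sqrt n \<rho>1 * U"
  define SBt where "SBt = adj U * mat_sqrt n \<rho>2 * U"
  note aA = analysis[OF dA u, folded At_def SAt_def]
  note aB = analysis[OF dB u, folded Bt_def SBt_def]
  have Atc: "At \<in> carrier_mat n n" unfolding At_def by (rule conj_carrier[OF u Ac])
  have Btc: "Bt \<in> carrier_mat n n" unfolding Bt_def by (rule conj_carrier[OF u Bc])
  define \<alpha> where "\<alpha> i = Re (At $$ (i,i))" for i
  define \<beta> where "\<beta> i = Re (Bt $$ (i,i))" for i
  define s where "s i = Re (SAt $$ (i,i))" for i
  define t where "t i = Re (SBt $$ (i,i))" for i
  have conjC: "adj U * C * U = complex_of_real p \<cdot>\<^sub>m At + complex_of_real (1 - p) \<cdot>\<^sub>m Bt"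
  proof -
    have "adj U * C = adj U * (complex_of_real p \<cdot>\<^sub>m \<rho>1) + adj U * (complex_of_real (1 - p) \<cdot>\<^sub>m \<rho>2)"
      unfolding C_def by (rule mult_add_distrib_mat[of _ n n]) (use Ud pAc pBc in auto)
    also have "\<dots> = complex_of_real p \<cdot>\<^sub>m (adj U * \<rho>1) + complex_of_real (1 - p) \<cdot>\<^sub>m (adj U * \<rho>2)"
      using mult_smult_distrib[OF Ud(2) Ac] mult_smult_distrib[OF Ud(2) Bc] by simp
    finally have x: "adj U * C = complex_of_real p \<cdot>\<^sub>m (adj U * \<rho>1) + complex_of_real (1 - p) \<cdot>\<^sub>m (adj U * \<rho>2)" .
    have c1: "complex_of_real p \<cdot>\<^sub>m (adj U * \<rho>1) \<in> carrier_mat n n" using mult_carrier_mat[OF Ud(2) Ac] by simp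
    have c2: "complex_of_real (1 - p) \<cdot>\<^sub>m (adj U * \<rho>2) \<in> carrier_mat n n" using mult_carrier_mat[OF Ud(2) Bc] by simp
    have "adj U * C * U = complex_of_real p \<cdot>\<^sub>m (adj U * \<rho>1) * U + complex_of_real (1 - p) \<cdot>\<^sub>m (adj U * \<rho>2) * U"
      unfolding x by (rule add_mult_distrib_mat[OF c1 c2 Ud(1)])
    also have "\<dots> = complex_of_real p \<cdot>\<^sub>m At + complex_of_real (1 - p) \<cdot>\<^sub>m Bt"
      unfolding At_def Bt_def
      by (simp only: mult_smult_assoc_mat[OF mult_carrier_mat[OF Ud(2) Ac] Ud(1)] mult_smult_assoc_mat[OF mult_carrier_mat[OF Ud(2) Bc] Ud(1)])
    finally show ?thesis .
  qed
  have conjC2: "adj U * C * U = dmat n \<gamma>" unfolding Ce by (rule conj_back[OF u dmat_carrier])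
  have gam: "\<And>i. i < n \<Longrightarrow> \<gamma> i = p * \<alpha> i + (1 - p) * \<beta> i"
  proof -
    fix i assume i: "i < n"
    have "dmat n \<gamma> $$ (i,i) = (complex_of_real p \<cdot>\<^sub>m At + complex_of_real (1 - p) \<cdot>\<^sub>m Bt) $$ (i,i)"
      using conjC conjC2 by simp
    also have "\<dots> = complex_of_real p * At $$ (i,i) + complex_of_real (1 - p) * Bt $$ (i,i)"
      using Atc Btc i by simp
    finally have "complex_of_real (\<gamma> i) = complex_of_real p * At $$ (i,i) + complex_of_real (1 - p) * Bt $$ (i,i)"
      using i by simp
    from arg_cong[OF this, of Re] show "\<gamma> i = p * \<alpha> i + (1 - p) * \<beta> i"
      unfolding \<alpha>_def \<beta>_def by simp
  qed
  have a0: "\<And>i. i < n \<Longrightarrow> \<alpha> i \<ge> 0"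
    unfolding \<alpha>_def using aA(1) by (simp add: sum_nonneg)
  have b0: "\<And>i. i < n \<Longrightarrow> \<beta> i \<ge> 0"
    unfolding \<beta>_def using aB(1) by (simp add: sum_nonneg)
  have g0: "\<And>i. i < n \<Longrightarrow> \<gamma> i \<ge> 0" using gam a0 b0 p by simp
  have pC: "psd_mat n C" unfolding Ce by (rule psd_diag[OF u g0])
  define S where "S = U * dmat n (\<lambda>i. sqrt (\<gamma> i)) * adj U"
  have pS: "psd_mat n S" unfolding S_def by (rule psd_diag[OF u]) (use g0 in simp)
  have "S * S = U * dmat n (\<lambda>i. sqrt (\<gamma> i) * sqrt (\<gamma> i)) * adj U"
    unfolding S_def by (rule diag_mult[OF u])
  also have "dmat n (\<lambda>i. sqrt (\<gamma> i) * sqrt (\<gamma> i)) = dmat n \<gamma>"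
    by (rule eq_matI) (use g0 in auto)
  finally have SS: "S * S = C" using Ce by simp
  have msC: "mat_sqrt n C = S" by (rule mat_sqrt_eq[OF pC pS SS])
  have uU': "unitary n (adj U)" using Ud by (simp add: unitary_def)
  have "mtrace S = mtrace (dmat n (\<lambda>i. sqrt (\<gamma> i)))"
    unfolding S_def using mtrace_conj[OF uU' dmat_carrier] by simp
  then have trS: "Re (mtrace (mat_sqrt n C)) = (\<Sum>i<n. sqrt (\<gamma> i))"
    unfolding msC by (simp add: mtrace_dmat)
  have hNC: "hN n C = ((\<Sum>i<n. sqrt (p * \<alpha> i + (1 - p) * \<beta> i))^2 - 1) / 2"
    unfolding hN_def trS using gam by simp
  have hNA: "hN n \<rho>1 = ((\<Sum>i<n. s i)^2 - 1) / 2" unfolding hN_def aA(3) s_def ..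
  have hNB: "hN n \<rho>2 = ((\<Sum>i<n. t i)^2 - 1) / 2" unfolding hN_def aB(3) t_def ..
  have sa: "(\<Sum>i<n. \<alpha> i) = 1" unfolding \<alpha>_def by (rule aA(2))
  have sb: "(\<Sum>i<n. \<beta> i) = 1" unfolding \<beta>_def by (rule aB(2))
  have sl: "\<And>i. i < n \<Longrightarrow> (s i)^2 \<le> \<alpha> i" unfolding s_def \<alpha>_def by (rule aA(4))
  have tl: "\<And>i. i < n \<Longrightarrow> (t i)^2 \<le> \<beta> i" unfolding t_def \<beta>_def by (rule aB(4))
  note rk = real_key[of n \<alpha> \<beta> s t p, OF a0 b0 sa sb sl tl p]
  have neq: "p * (\<Sum>i<n. s i)^2 + (1-p) * (\<Sum>i<n. t i)^2 \<noteq> (\<Sum>i<n. sqrt (p * \<alpha> i + (1-p) * \<beta> i))^2"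
  proof
    assume eq: "p * (\<Sum>i<n. s i)^2 + (1-p) * (\<Sum>i<n. t i)^2 = (\<Sum>i<n. sqrt (p * \<alpha> i + (1-p) * \<beta> i))^2"
    have all: "\<forall>i<n. \<alpha> i = \<beta> i \<and> (s i)^2 = \<alpha> i \<and> (t i)^2 = \<beta> i" using real_key(2)[of n \<alpha> \<beta> s t p] a0 b0 sa sb sl tl p eq by blast
    have "At = dmat n \<alpha>" unfolding \<alpha>_def by (rule aA(5)) (use all in \<open>auto simp: s_def \<alpha>_def\<close>)
    moreover have "Bt = dmat n \<beta>" unfolding \<beta>_def by (rule aB(5)) (use all in \<open>auto simp: t_def \<beta>_def\<close>)
    moreover have "dmat n \<alpha> = dmat n \<beta>" by (rule eq_matI) (use all in auto)
    ultimately have "At = Bt" by simp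
    then have "U * At * adj U = U * Bt * adj U" by simp
    then show False using conj_unitary[OF u Ac] conj_unitary[OF u Bc] ne unfolding At_def Bt_def by simp
  qed
  have lt: "p * (\<Sum>i<n. s i)^2 + (1-p) * (\<Sum>i<n. t i)^2 < (\<Sum>i<n. sqrt (p * \<alpha> i + (1-p) * \<beta> i))^2"
    using rk(1) neq by linarith
  show ?thesis unfolding C_def[symmetric] hNC hNA hNB using lt by (simp add: field_simps)
qed


end
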